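(* Let $J\ge 2$ and, for every dimension $d$, let $F_1,\ldots,F_J$ be distributions on $\mathbb{R}^d$ satisfying assumptions (A1$^\circ$)–(A3$^\circ$) in the context. For each $j$ let $\mathbf{X}_{j1},\ldots,\mathbf{X}_{jn_j}$ be a training sample from $F_j$ with fixed $n_j\ge 2$, all training observations mutually independent and independent of the test observation. If $\mathcal{E}_{ji}>0$ for all $j\neq i$, then the misclassification rate of the MDist1 classifier converges to $0$ as $d\to\infty$.
   Context: $\|\mathbf{v}\|_1=\sum_q|v_q|$; "measurement variables" are coordinates. Assumptions: (A1$^\circ$) In each class, the coordinates have second moments bounded uniformly over coordinates and $d$. (A2$^\circ$) If $\mathbf{X}=(X_1,\ldots,X_d)^\top\sim F_j$ and $\mathbf{Y}=(Y_1,\ldots,Y_d)^\top\sim F_i$ ($1\le j,i\le J$) are independent and $\mathbf{U}=\mathbf{X}-\mathbf{Y}$, then $\sum_{r\neq s}|\mathrm{Corr}(|U_r|,|U_s|)|=o(d^2)$. (A3$^\circ$) For independent $\mathbf{X}\sim F_j$, $\mathbf{Y}\sim F_i$ ($1\le j,i\le J$), $\frac1d E\|\mathbf{X}-\mathbf{Y}\|_1=\frac1d\sum_{q=1}^dE|X_q-Y_q|$ converges to a constant $\tau_{ji}$ as $d\to\infty$. For $j\ne i$ and independent $\mathbf{X},\mathbf{X}'\sim F_j$, $\mathbf{Y},\mathbf{Y}'\sim F_i$, let $e_{ji}^{(q)}=2E|X_q-Y_q|-E|X_q-X_q'|-E|Y_q-Y_q'|$, $\bar e_{ji}(d)=\frac1d\sum_{q=1}^d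 e_{ji}^{(q)}$, and $\mathcal{E}_{ji}=\lim_{d\to\infty}\bar e_{ji}(d)$. MDist1 classifier: for a point $\mathbf{z}$, its feature vector is $(d^*_1(\mathbf{z}),\ldots,d^*_J(\mathbf{z}))$ with $d^*_j(\mathbf{z})=\min_{1\le\ell\le n_j}\|\mathbf{z}-\mathbf{X}_{j\ell}\|_1$; for a training point $\mathbf{X}_{ji}$ the features are computed leave-one-out (the minimum over its own class excludes $\ell=i$). A test observation is assigned to the class of the training observation whose feature vector is nearest (Euclidean distance) to its own feature vector. Misclassification rate converging to $0$ means that for each $j$, the probability that $\mathbf{Z}\sim F_j$ is not assigned to class $j$ tends to $0$. *)

theory Defs
  imports "HOL-Probability.Probability"
begin

text \<open>Points of R^d are functions nat => real; coordinate q ranges over {..<d}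
  (i.e. 0-based coordinates 0..d-1 instead of 1..d).\<close>

definition l1dist :: "nat \<Rightarrow> (nat \<Rightarrow> real) \<Rightarrow> (nat \<Rightarrow> real) \<Rightarrow> real" where
  "l1dist d u v = (\<Sum>q<d. \<bar>u q - v q\<bar>)"

definition covariance :: "'a measure \<Rightarrow> ('a \<Rightarrow> real) \<Rightarrow> ('a \<Rightarrow> real) \<Rightarrow> real" where
  "covariance M f g =
     (\<integral>w. (f w - (\<integral>w'. f w' \<partial>M)) * (g w - (\<integral>w'. g w' \<partial>M)) \<partial>M)"

definition correlation :: "'a measure \<Rightarrow> ('a \<Rightarrow> real) \<Rightarrow> ('a \<Rightarrow> real) \<Rightarrow> real" where
  "correlation M f g =
     covariance M f g / (sqrt (covariance M f f) * sqrt (covariance M g g))"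

definition mad :: "(nat \<Rightarrow> real) measure \<Rightarrow> (nat \<Rightarrow> real) measure \<Rightarrow> nat \<Rightarrow> real" where
  "mad P Q q = (\<integral>xy. \<bar>fst xy q - snd xy q\<bar> \<partial>(P \<Otimes>\<^sub>M Q))"

definition energy_avg :: "nat \<Rightarrow> (nat \<Rightarrow> real) measure \<Rightarrow> (nat \<Rightarrow> real) measure \<Rightarrow> real" where
  "energy_avg d P Q = (\<Sum>q<d. 2 * mad P Q q - mad P P q - mad Q Q q) / real d"

text \<open>Training sample: x (k,l), class k in {1..J}, l in {1..n k}.\<close>
definition test_features ::
  "nat \<Rightarrow> (nat \<Rightarrow> nat) \<Rightarrow> (nat \<times> nat \<Rightarrow> nat \<Rightarrow> real) \<Rightarrow> (nat \<Rightarrow> real) \<Rightarrow> nat \<Rightarrow> real" where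
  "test_features d n x z = (\<lambda>k. Min ((\<lambda>l. l1dist d z (x (k,l))) ` {1..n k}))"

definition train_features ::
  "nat \<Rightarrow> (nat \<Rightarrow> nat) \<Rightarrow> (nat \<times> nat \<Rightarrow> nat \<Rightarrow> real) \<Rightarrow> nat \<times> nat \<Rightarrow> nat \<Rightarrow> real" where
  "train_features d n x ji = (\<lambda>k. Min ((\<lambda>l. l1dist d (x ji) (x (k,l))) `
       {l \<in> {1..n k}. (k,l) \<noteq> ji}))"

definition feat_dist :: "nat \<Rightarrow> (nat \<Rightarrow> real) \<Rightarrow> (nat \<Rightarrow> real) \<Rightarrow> real" where
  "feat_dist J a b = sqrt (\<Sum>k\<in>{1..J}. (a k - b k)^2)"

text \<open>The test point z (true class j0) is (possibly, under some tie-breaking) not assigned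
  to class j0: some training point of another class has a feature vector at least as
  close as every training point of class j0.\<close>
definition mdist1_misclassified ::
  "nat \<Rightarrow> nat \<Rightarrow> (nat \<Rightarrow> nat) \<Rightarrow> (nat \<times> nat \<Rightarrow> nat \<Rightarrow> real) \<Rightarrow> (nat \<Rightarrow> real) \<Rightarrow> nat \<Rightarrow> bool" where
  "mdist1_misclassified d J n x z j0 \<longleftrightarrow>
     (\<exists>i\<in>{1..J}. \<exists>l\<in>{1..n i}. i \<noteq> j0 \<and>
        (\<forall>l'\<in>{1..n j0}.
           feat_dist J (test_features d n x z) (train_features d n x (i,l))
           \<le> feat_dist J (test_features d n x z) (train_features d n x (j0,l'))))"

definition sample_space ::
  "nat \<Rightarrow> nat \<Rightarrow> (nat \<Rightarrow> nat) \<Rightarrow> (nat \<Rightarrow> nat \<Rightarrow> (nat \<Rightarrow> real) measure) \<Rightarrow> nat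
    \<Rightarrow> ((nat \<times> nat \<Rightarrow> nat \<Rightarrow> real) \<times> (nat \<Rightarrow> real)) measure" where
  "sample_space d J n F j0 =
     (PiM (SIGMA k:{1..J}. {1..n k}) (\<lambda>(k,l). F d k)) \<Otimes>\<^sub>M F d j0"

definition misclass_event ::
  "nat \<Rightarrow> nat \<Rightarrow> (nat \<Rightarrow> nat) \<Rightarrow> (nat \<Rightarrow> nat \<Rightarrow> (nat \<Rightarrow> real) measure) \<Rightarrow> nat
    \<Rightarrow> ((nat \<times> nat \<Rightarrow> nat \<Rightarrow> real) \<times> (nat \<Rightarrow> real)) set" where
  "misclass_event d J n F j0 =
     {xz \<in> space (sample_space d J n F j0). mdist1_misclassified d J n (fst xz) (snd xz) j0}"

end

theory Submission
  imports Defs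
begin

lemma L2_mult:
  fixes f g :: "'a \<Rightarrow> real"
  assumes [measurable]: "f \<in> borel_measurable M" "g \<in> borel_measurable M"
    and "integrable M (\<lambda>x. (f x)^2)" "integrable M (\<lambda>x. (g x)^2)"
  shows "integrable M (\<lambda>x. f x * g x)"
proof (rule Bochner_Integration.integrable_bound[of _ "\<lambda>x. (f x)^2 + (g x)^2"])
  show "integrable M (\<lambda>x. (f x)^2 + (g x)^2)" using assms by auto
  show "AE x in M. norm (f x * g x) \<le> norm ((f x)^2 + (g x)^2)"
  proof (intro AE_I2)
    fix x
    have "2 * \<bar>f x * g x\<bar> \<le> (f x)^2 + (g x)^2"
      using sum_squares_bound[of "\<bar>f x\<bar>" "\<bar>g x\<bar>"] by (simp add: abs_mult)
    then show "norm (f x * g x) \<le> norm ((f x)^2 + (g x)^2)" by simp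
  qed
qed simp

lemma L2_shift:
  fixes f :: "'a \<Rightarrow> real"
  assumes [measurable]: "f \<in> borel_measurable M" and fin: "finite_measure M"
    and "integrable M (\<lambda>x. (f x)^2)"
  shows "integrable M (\<lambda>x. (f x - c)^2)"
proof -
  interpret finite_measure M by fact
  have "integrable M f" using assms square_integrable_imp_integrable by blast
  then have "integrable M (\<lambda>x. (f x)^2 - 2 * c * f x + c^2)" using assms by auto
  then show ?thesis by (simp add: power2_diff algebra_simps)
qed

context prob_space begin

lemma cov_nonneg: "0 \<le> covariance M f f"
  unfolding covariance_def by (intro integral_nonneg_AE) auto

lemma cov_zero:
  fixes f g :: "'a \<Rightarrow> real"
  assumes [measurable]: "f \<in> borel_measurable M" "g \<in> borel_measurable M"
    and f2: "integrable M (\<lambda>x. (f x)^2)" and g2: "integrable M (\<lambda>x. (g x)^2)"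
    and z: "covariance M f f = 0"
  shows "covariance M f g = 0"
proof -
  let ?F = "\<lambda>x. f x - expectation f" and ?G = "\<lambda>x. g x - expectation g"
  have F2: "integrable M (\<lambda>x. (?F x)^2)"
    using L2_shift[OF _ _ f2] by (simp add: finite_measure_axioms)
  have "integral\<^sup>L M (\<lambda>x. (?F x)^2) = 0" using z unfolding covariance_def by (simp add: power2_eq_square)
  then have "AE x in M. (?F x)^2 = 0"
    using integral_nonneg_eq_0_iff_AE[OF F2] by auto
  then have "AE x in M. ?F x * ?G x = 0" by eventually_elim auto
  then have "integral\<^sup>L M (\<lambda>x. ?F x * ?G x) = integral\<^sup>L M (\<lambda>x. 0)"
    by (intro integral_cong_AE) auto
  then show ?thesis unfolding covariance_def by simp
qed

lemma cov_bound:
  fixes f g :: "'a \<Rightarrow> real"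
  assumes [measurable]: "f \<in> borel_measurable M" "g \<in> borel_measurable M"
    and f2: "integrable M (\<lambda>x. (f x)^2)" and g2: "integrable M (\<lambda>x. (g x)^2)"
    and Kf: "covariance M f f \<le> K" and Kg: "covariance M g g \<le> K"
  shows "\<bar>covariance M f g\<bar> \<le> \<bar>correlation M f g\<bar> * K"
proof -
  have a: "0 \<le> covariance M f f" "0 \<le> covariance M g g" by (rule cov_nonneg)+
  show ?thesis
  proof (cases "covariance M f f = 0 \<or> covariance M g g = 0")
    case True
    then have "covariance M f g = 0"
    proof
      assume "covariance M f f = 0" then show ?thesis using cov_zero f2 g2 by simp
    next
      assume "covariance M g g = 0"
      then have "covariance M g f = 0" using cov_zero f2 g2 by simp
      then show ?thesis unfolding covariance_def by (simp add: mult.commute)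
    qed
    moreover have "0 \<le> K" using a Kf by linarith
    ultimately show ?thesis by simp
  next
    case False
    then have pos: "0 < sqrt (covariance M f f) * sqrt (covariance M g g)" using a by auto
    define s where "s = sqrt (covariance M f f) * sqrt (covariance M g g)"
    have "correlation M f g = covariance M f g / s" unfolding correlation_def s_def ..
    then have eq: "covariance M f g = correlation M f g * (sqrt (covariance M f f) * sqrt (covariance M g g))"
      using pos unfolding s_def[symmetric] by simp
    have "sqrt (covariance M f f) * sqrt (covariance M g g) \<le> sqrt K * sqrt K"
      using a Kf Kg by (intro mult_mono) auto
    also have "\<dots> = K" using a Kf by simp
    finally have "sqrt (covariance M f f) * sqrt (covariance M g g) \<le> K" .
    then show ?thesis unfolding eq abs_mult using pos
      by (intro mult_left_mono) auto
  qed
qed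

lemma var_sum:
  fixes U :: "nat \<Rightarrow> 'a \<Rightarrow> real"
  assumes fin: "finite I"
    and [measurable]: "\<And>r. r \<in> I \<Longrightarrow> U r \<in> borel_measurable M"
    and L2: "\<And>r. r \<in> I \<Longrightarrow> integrable M (\<lambda>x. (U r x)^2)"
  shows "integrable M (\<lambda>x. (\<Sum>r\<in>I. U r x)^2)"
    and "variance (\<lambda>x. \<Sum>r\<in>I. U r x) = (\<Sum>r\<in>I. \<Sum>s\<in>I. covariance M (U r) (U s))"
proof -
  have i1: "integrable M (U r)" if "r \<in> I" for r
    using square_integrable_imp_integrable[OF _ L2] that by simp
  have i2: "integrable M (\<lambda>x. U r x * U s x)" if "r \<in> I" "s \<in> I" for r s
    using L2_mult[OF _ _ L2 L2] that by simp
  have "(\<lambda>x. (\<Sum>r\<in>I. U r x)^2) = (\<lambda>x. \<Sum>r\<in>I. \<Sum>s\<in>I. U r x * U s x)"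
    by (simp add: power2_eq_square sum_product)
  then show "integrable M (\<lambda>x. (\<Sum>r\<in>I. U r x)^2)" using i2 by simp
  have E: "expectation (\<lambda>x. \<Sum>r\<in>I. U r x) = (\<Sum>r\<in>I. expectation (U r))"
    using i1 by (simp add: integral_sum)
  have i3: "integrable M (\<lambda>x. (U r x - expectation (U r)) * (U s x - expectation (U s)))"
    if "r \<in> I" "s \<in> I" for r s
    using L2_mult[OF _ _ L2_shift[OF _ _ L2] L2_shift[OF _ _ L2]] that
    by (simp add: finite_measure_axioms)
  have "variance (\<lambda>x. \<Sum>r\<in>I. U r x) =
     expectation (\<lambda>x. \<Sum>r\<in>I. \<Sum>s\<in>I. (U r x - expectation (U r)) * (U s x - expectation (U s)))"
    unfolding E by (simp add: power2_eq_square sum_product sum_subtractf[symmetric])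
  also have "\<dots> = (\<Sum>r\<in>I. \<Sum>s\<in>I. covariance M (U r) (U s))"
    unfolding covariance_def using i3 by (simp add: integral_sum)
  finally show "variance (\<lambda>x. \<Sum>r\<in>I. U r x) = (\<Sum>r\<in>I. \<Sum>s\<in>I. covariance M (U r) (U s))" .
qed

lemma var_sum_bound:
  fixes U :: "nat \<Rightarrow> 'a \<Rightarrow> real"
  assumes fin: "finite I"
    and [measurable]: "\<And>r. r \<in> I \<Longrightarrow> U r \<in> borel_measurable M"
    and L2: "\<And>r. r \<in> I \<Longrightarrow> integrable M (\<lambda>x. (U r x)^2)"
    and K: "\<And>r. r \<in> I \<Longrightarrow> covariance M (U r) (U r) \<le> K"
  shows "variance (\<lambda>x. \<Sum>r\<in>I. U r x) \<le> K * card I + K * (\<Sum>r\<in>I. \<Sum>s\<in>I - {r}. \<bar>correlation M (U r) (U s)\<bar>)"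
proof -
  have "variance (\<lambda>x. \<Sum>r\<in>I. U r x) = (\<Sum>r\<in>I. \<Sum>s\<in>I. covariance M (U r) (U s))"
    by (rule var_sum(2)[OF fin]) (use L2 in auto)
  also have "\<dots> = (\<Sum>r\<in>I. covariance M (U r) (U r) + (\<Sum>s\<in>I - {r}. covariance M (U r) (U s)))"
    using fin by (intro sum.cong refl) (simp add: sum.remove)
  also have "\<dots> \<le> (\<Sum>r\<in>I. K + (\<Sum>s\<in>I - {r}. K * \<bar>correlation M (U r) (U s)\<bar>))"
  proof (intro sum_mono add_mono K)
    fix r s assume "r \<in> I" "s \<in> I - {r}"
    then have "\<bar>covariance M (U r) (U s)\<bar> \<le> \<bar>correlation M (U r) (U s)\<bar> * K"
      by (intro cov_bound L2 K) auto
    then show "covariance M (U r) (U s) \<le> K * \<bar>correlation M (U r) (U s)\<bar>"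
      by (simp add: mult.commute)
  qed
  also have "\<dots> = K * card I + K * (\<Sum>r\<in>I. \<Sum>s\<in>I - {r}. \<bar>correlation M (U r) (U s)\<bar>)"
    by (simp add: sum.distrib sum_distrib_left)
  finally show ?thesis .
qed

end

lemma distr_pair_snd':
  assumes "prob_space P" "prob_space Q"
  shows "distr (P \<Otimes>\<^sub>M Q) Q snd = Q"
proof (intro measure_eqI)
  interpret P: prob_space P by fact
  interpret Q: prob_space Q by fact
  fix A assume A: "A \<in> sets (distr (P \<Otimes>\<^sub>M Q) Q snd)"
  from A have "emeasure (distr (P \<Otimes>\<^sub>M Q) Q snd) A = emeasure (P \<Otimes>\<^sub>M Q) (space P \<times> A)"
    by (auto simp add: emeasure_distr space_pair_measure dest: sets.sets_into_space intro!: arg_cong2[where f=emeasure])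
  with A show "emeasure (distr (P \<Otimes>\<^sub>M Q) Q snd) A = emeasure Q A"
    by (simp add: Q.emeasure_pair_measure_Times P.emeasure_space_1)
qed simp

lemma pair_cheb:
  fixes P Q :: "(nat \<Rightarrow> real) measure" and d :: nat and C e :: real
  assumes P: "prob_space P" and Q: "prob_space Q"
    and sP: "sets P = sets (PiM {..<d} (\<lambda>_. borel))"
    and sQ: "sets Q = sets (PiM {..<d} (\<lambda>_. borel))"
    and iP: "\<forall>q<d. integrable P (\<lambda>x. (x q)^2) \<and> (\<integral>x. (x q)^2 \<partial>P) \<le> C"
    and iQ: "\<forall>q<d. integrable Q (\<lambda>x. (x q)^2) \<and> (\<integral>x. (x q)^2 \<partial>Q) \<le> C"
    and e: "0 < e"
  shows "measure (P \<Otimes>\<^sub>M Q) {p \<in> space (P \<Otimes>\<^sub>M Q).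
            e \<le> \<bar>l1dist d (fst p) (snd p) - (\<Sum>q<d. mad P Q q)\<bar>}
         \<le> (4 * C * real d + 4 * C * (\<Sum>r<d. \<Sum>s\<in>{..<d} - {r}.
               \<bar>correlation (P \<Otimes>\<^sub>M Q) (\<lambda>xy. \<bar>fst xy r - snd xy r\<bar>) (\<lambda>xy. \<bar>fst xy s - snd xy s\<bar>)\<bar>)) / e^2"
proof -
  interpret PQ: prob_space "P \<Otimes>\<^sub>M Q" using prob_space_pair[OF P Q] .
  interpret Qp: prob_space Q by fact
  let ?M = "P \<Otimes>\<^sub>M Q"
  define U where "U = (\<lambda>r (xy :: (nat \<Rightarrow> real) \<times> (nat \<Rightarrow> real)). \<bar>fst xy r - snd xy r\<bar>)"
  have mP: "(\<lambda>x. x q) \<in> borel_measurable P" if "q < d" for q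
    using that by (simp add: measurable_cong_sets[OF sP refl])
  have mQ: "(\<lambda>x. x q) \<in> borel_measurable Q" if "q < d" for q
    using that by (simp add: measurable_cong_sets[OF sQ refl])
  have mf: "(\<lambda>p. fst p q) \<in> borel_measurable ?M" if "q < d" for q
    using measurable_compose[OF measurable_fst[of P Q] mP[OF that]] by simp
  have ms: "(\<lambda>p. snd p q) \<in> borel_measurable ?M" if "q < d" for q
    using measurable_compose[OF measurable_snd[of P Q] mQ[OF that]] by simp
  have mU: "U r \<in> borel_measurable ?M" if "r < d" for r
    unfolding U_def using mf[OF that] ms[OF that] by measurable
  have df: "distr ?M P fst = P" by (rule Qp.distr_pair_fst)
  have ds: "distr ?M Q snd = Q" by (rule distr_pair_snd'[OF P Q])
  have f2: "integrable ?M (\<lambda>p. (fst p q)^2)" "(\<integral>p. (fst p q)^2 \<partial>?M) \<le> C" if "q < d" for q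
  proof -
    have m2: "(\<lambda>x. (x q)^2) \<in> borel_measurable P" using mP[OF that] by measurable
    have "integrable (distr ?M P fst) (\<lambda>x. (x q)^2)" using df iP that by simp
    then show "integrable ?M (\<lambda>p. (fst p q)^2)"
      using integrable_distr_eq[OF measurable_fst[of P Q] m2] by simp
    have "(\<integral>p. (fst p q)^2 \<partial>?M) = (\<integral>x. (x q)^2 \<partial>distr ?M P fst)"
      by (rule integral_distr[symmetric]) (use m2 df in auto)
    then show "(\<integral>p. (fst p q)^2 \<partial>?M) \<le> C" using df iP that by simp
  qed
  have s2: "integrable ?M (\<lambda>p. (snd p q)^2)" "(\<integral>p. (snd p q)^2 \<partial>?M) \<le> C" if "q < d" for q
  proof -
    have m2: "(\<lambda>x. (x q)^2) \<in> borel_measurable Q" using mQ[OF that] by measurable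
    have "integrable (distr ?M Q snd) (\<lambda>x. (x q)^2)" using ds iQ that by simp
    then show "integrable ?M (\<lambda>p. (snd p q)^2)"
      using integrable_distr_eq[OF measurable_snd[of P Q] m2] by simp
    have "(\<integral>p. (snd p q)^2 \<partial>?M) = (\<integral>x. (x q)^2 \<partial>distr ?M Q snd)"
      by (rule integral_distr[symmetric]) (use m2 ds in auto)
    then show "(\<integral>p. (snd p q)^2 \<partial>?M) \<le> C" using ds iQ that by simp
  qed
  have bnd: "(U r p)^2 \<le> 2 * (fst p r)^2 + 2 * (snd p r)^2" for r p
  proof -
    have "0 \<le> (fst p r + snd p r)^2" by simp
    then show ?thesis unfolding U_def by (simp add: power2_abs power2_diff power2_sum)
  qed
  have U2: "integrable ?M (\<lambda>p. (U r p)^2)" if "r < d" for r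
  proof (rule Bochner_Integration.integrable_bound[of _ "\<lambda>p. 2 * (fst p r)^2 + 2 * (snd p r)^2"])
    show "integrable ?M (\<lambda>p. 2 * (fst p r)^2 + 2 * (snd p r)^2)" using f2 s2 that by auto
    show "(\<lambda>p. (U r p)^2) \<in> borel_measurable ?M" using mU[OF that] by measurable
    show "AE x in ?M. norm ((U r x)^2) \<le> norm (2 * (fst x r)^2 + 2 * (snd x r)^2)"
      using bnd by (intro AE_I2) simp
  qed
  have covK: "covariance ?M (U r) (U r) \<le> 4 * C" if "r < d" for r
  proof -
    have iU: "integrable ?M (U r)"
      using PQ.square_integrable_imp_integrable[OF mU[OF that] U2[OF that]] .
    have "covariance ?M (U r) (U r) = PQ.variance (U r)"
      unfolding covariance_def by (simp add: power2_eq_square)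
    also have "\<dots> = PQ.expectation (\<lambda>p. (U r p)^2) - (PQ.expectation (U r))^2"
      by (rule PQ.variance_eq[OF iU U2[OF that]])
    also have "\<dots> \<le> PQ.expectation (\<lambda>p. (U r p)^2)" by simp
    also have "\<dots> \<le> PQ.expectation (\<lambda>p. 2 * (fst p r)^2 + 2 * (snd p r)^2)"
      using f2 s2 that U2 bnd by (intro integral_mono) auto
    also have "\<dots> = 2 * PQ.expectation (\<lambda>p. (fst p r)^2) + 2 * PQ.expectation (\<lambda>p. (snd p r)^2)"
      using f2 s2 that by simp
    also have "\<dots> \<le> 4 * C" using f2(2)[OF that] s2(2)[OF that] by simp
    finally show ?thesis .
  qed
  define T where "T = (\<lambda>p. \<Sum>r\<in>{..<d}. U r p)"
  have T_eq: "T p = l1dist d (fst p) (snd p)" for p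
    unfolding T_def U_def l1dist_def by simp
  have iU: "integrable ?M (U r)" if "r < d" for r
    using PQ.square_integrable_imp_integrable[OF mU[OF that] U2[OF that]] .
  have ET: "PQ.expectation T = (\<Sum>q<d. mad P Q q)"
    unfolding T_def using iU by (simp add: integral_sum mad_def U_def)
  have mT: "T \<in> borel_measurable ?M" unfolding T_def using mU by measurable
  have T2: "integrable ?M (\<lambda>p. (T p)^2)"
    unfolding T_def by (rule PQ.var_sum(1)) (use mU U2 in auto)
  have "PQ.prob {p \<in> space ?M. \<bar>T p - PQ.expectation T\<bar> \<ge> e} \<le> PQ.variance T / e^2"
    by (rule PQ.Chebyshev_inequality[OF mT T2 e])
  also have "PQ.variance T \<le> 4 * C * card {..<d} + 4 * C * (\<Sum>r\<in>{..<d}. \<Sum>s\<in>{..<d} - {r}. \<bar>correlation ?M (U r) (U s)\<bar>)"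
    unfolding T_def by (rule PQ.var_sum_bound) (use mU U2 covK in auto)
  finally show ?thesis
    using e by (simp add: T_eq ET U_def divide_right_mono)
qed


definition slot :: "(nat \<times> nat) option \<Rightarrow> ((nat \<times> nat \<Rightarrow> nat \<Rightarrow> real) \<times> (nat \<Rightarrow> real)) \<Rightarrow> nat \<Rightarrow> real" where
  "slot a \<omega> = (case a of None \<Rightarrow> snd \<omega> | Some s \<Rightarrow> fst \<omega> s)"

definition cls :: "nat \<Rightarrow> (nat \<times> nat) option \<Rightarrow> nat" where
  "cls j0 a = (case a of None \<Rightarrow> j0 | Some s \<Rightarrow> fst s)"

lemma slot_simps[simp]: "slot None \<omega> = snd \<omega>" "slot (Some s) \<omega> = fst \<omega> s"
  by (simp_all add: slot_def)

lemma cls_simps[simp]: "cls j0 None = j0" "cls j0 (Some (k,l)) = k"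
  by (simp_all add: cls_def)

lemma cls_in:
  assumes "j0 \<in> {1..J}" "a \<in> insert None (Some ` (SIGMA k:{1..J}. {1..n k}))"
  shows "cls j0 a \<in> {1..J}"
  using assms by (auto simp: cls_def)

lemma PiM_comp_emeasure:
  assumes M: "\<And>i. i \<in> I \<Longrightarrow> prob_space (M i)" and s: "s \<in> I" and X: "X \<in> sets (M s)"
  shows "emeasure (PiM I M) ((\<lambda>x. x s) -` X \<inter> space (PiM I M)) = emeasure (M s) X"
proof -
  have "emeasure (M s) X = emeasure (distr (PiM I M) (M s) (\<lambda>x. x s)) X"
    using distr_PiM_component[of I M s, OF M s] by simp
  also have "\<dots> = emeasure (PiM I M) ((\<lambda>x. x s) -` X \<inter> space (PiM I M))"
    using X s by (intro emeasure_distr) auto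
  finally show ?thesis by simp
qed

lemma PiM_comp2_emeasure:
  assumes M: "\<And>i. i \<in> I \<Longrightarrow> prob_space (M i)" and s: "s \<in> I" and t: "t \<in> I" and st: "s \<noteq> t"
    and A: "A \<in> sets (M s)" and B: "B \<in> sets (M t)"
  shows "emeasure (PiM I M) {x \<in> space (PiM I M). x s \<in> A \<and> x t \<in> B} = emeasure (M s) A * emeasure (M t) B"
proof -
  let ?Y = "\<lambda>i. if i = s then A else B"
  have "{x \<in> space (PiM I M). x s \<in> A \<and> x t \<in> B} = prod_emb I M {s,t} (Pi\<^sub>E {s,t} ?Y)"
  proof (rule set_eqI)
    fix x
    have "restrict x {s,t} \<in> Pi\<^sub>E {s,t} ?Y \<longleftrightarrow> x s \<in> A \<and> x t \<in> B"
      using st by (auto simp: restrict_PiE_iff)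
    then show "x \<in> {x \<in> space (PiM I M). x s \<in> A \<and> x t \<in> B} \<longleftrightarrow> x \<in> prod_emb I M {s,t} (Pi\<^sub>E {s,t} ?Y)"
      unfolding prod_emb_def space_PiM by blast
  qed
  also have "emeasure (PiM I M) \<dots> = (\<Prod>i\<in>{s,t}. emeasure (M i) (?Y i))"
    by (rule emeasure_PiM_emb[of I M "{s,t}" ?Y]) (use s t A B st M in auto)
  also have "\<dots> = emeasure (M s) A * emeasure (M t) B" using st by simp
  finally show ?thesis .
qed

context
  fixes d J j0 :: nat and n :: "nat \<Rightarrow> nat" and F :: "nat \<Rightarrow> nat \<Rightarrow> (nat \<Rightarrow> real) measure"
  assumes j0: "j0 \<in> {1..J}" and Fp: "\<forall>k\<in>{1..J}. prob_space (F d k)"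
begin

abbreviation "II \<equiv> SIGMA k:{1..J}. {1..n k}"
abbreviation "MM \<equiv> (\<lambda>(k::nat,l::nat). F d k)"
abbreviation "SL \<equiv> insert None (Some ` II)"

lemma MM_prob: "i \<in> II \<Longrightarrow> prob_space (MM i)"
  using Fp by auto

lemma PI_prob: "prob_space (PiM II MM)"
  by (rule prob_space_PiM) (use MM_prob in auto)

lemma S_eq: "sample_space d J n F j0 = PiM II MM \<Otimes>\<^sub>M F d j0"
  by (simp add: sample_space_def)

lemma S_prob: "prob_space (sample_space d J n F j0)"
  unfolding S_eq by (rule prob_space_pair[OF PI_prob]) (use Fp j0 in auto)

lemma comp_meas: "(k,l) \<in> II \<Longrightarrow> (\<lambda>x. x (k,l)) \<in> measurable (PiM II MM) (F d k)"
  using measurable_component_singleton[of "(k,l)" II MM] by simp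

lemma slot_meas:
  assumes a: "a \<in> SL"
  shows "slot a \<in> measurable (sample_space d J n F j0) (F d (cls j0 a))"
proof (cases a)
  case None
  have "slot None = snd" by (rule ext) simp
  then show ?thesis using None unfolding S_eq by (simp add: measurable_snd)
next
  case (Some s)
  then obtain k l where s: "s = (k,l)" "(k,l) \<in> II" using a by auto
  have "(\<lambda>x. x s) \<in> measurable (PiM II MM) (MM s)"
    using s by (intro measurable_component_singleton) auto
  then have "(\<lambda>\<omega>. fst \<omega> s) \<in> measurable (PiM II MM \<Otimes>\<^sub>M F d j0) (MM s)"
    by (rule measurable_compose[OF measurable_fst])
  moreover have "slot (Some s) = (\<lambda>\<omega>. fst \<omega> s)" by (rule ext) simp
  ultimately show ?thesis using Some s unfolding S_eq by (simp add: cls_def)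
qed

lemma slot_distr:
  assumes a: "a \<in> SL" and b: "b \<in> SL" and ab: "a \<noteq> b"
  shows "F d (cls j0 a) \<Otimes>\<^sub>M F d (cls j0 b) = distr (sample_space d J n F j0) (F d (cls j0 a) \<Otimes>\<^sub>M F d (cls j0 b)) (\<lambda>\<omega>. (slot a \<omega>, slot b \<omega>))"
proof (rule pair_measure_eqI)
  interpret PI: prob_space "PiM II MM" by (rule PI_prob)
  interpret Fj: prob_space "F d j0" using Fp j0 by auto
  have ca: "prob_space (F d (cls j0 a))" using Fp cls_in[OF j0 a] by auto
  have cb: "prob_space (F d (cls j0 b))" using Fp cls_in[OF j0 b] by auto
  show "sigma_finite_measure (F d (cls j0 a))" using ca by (rule prob_space_imp_sigma_finite)
  show "sigma_finite_measure (F d (cls j0 b))" using cb by (rule prob_space_imp_sigma_finite)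
  show "sets (F d (cls j0 a) \<Otimes>\<^sub>M F d (cls j0 b)) = sets (distr (sample_space d J n F j0) (F d (cls j0 a) \<Otimes>\<^sub>M F d (cls j0 b)) (\<lambda>\<omega>. (slot a \<omega>, slot b \<omega>)))"
    by simp
  fix A B assume A: "A \<in> sets (F d (cls j0 a))" and B: "B \<in> sets (F d (cls j0 b))"
  have mp: "(\<lambda>\<omega>. (slot a \<omega>, slot b \<omega>)) \<in> measurable (sample_space d J n F j0) (F d (cls j0 a) \<Otimes>\<^sub>M F d (cls j0 b))"
    using slot_meas[OF a] slot_meas[OF b] by measurable
  have "emeasure (distr (sample_space d J n F j0) (F d (cls j0 a) \<Otimes>\<^sub>M F d (cls j0 b)) (\<lambda>\<omega>. (slot a \<omega>, slot b \<omega>))) (A \<times> B)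
      = emeasure (sample_space d J n F j0) ((\<lambda>\<omega>. (slot a \<omega>, slot b \<omega>)) -` (A \<times> B) \<inter> space (sample_space d J n F j0))"
    using A B by (intro emeasure_distr mp) auto
  also have "\<dots> = emeasure (F d (cls j0 a)) A * emeasure (F d (cls j0 b)) B"
  proof (cases a)
    case None
    then obtain k l where b': "b = Some (k,l)" "(k,l) \<in> II" using ab b by auto
    have Bs: "B \<in> sets (MM (k,l))" using B b' by simp
    have Asp: "A \<subseteq> space (F d j0)" using A None sets.sets_into_space by auto
    have "(\<lambda>\<omega>. (slot a \<omega>, slot b \<omega>)) -` (A \<times> B) \<inter> space (sample_space d J n F j0)
        = ((\<lambda>x. x (k,l)) -` B \<inter> space (PiM II MM)) \<times> A"
      using None b' Asp unfolding S_eq by (auto simp: space_pair_measure)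
    also have "emeasure (PiM II MM \<Otimes>\<^sub>M F d j0) \<dots> = emeasure (PiM II MM) ((\<lambda>x. x (k,l)) -` B \<inter> space (PiM II MM)) * emeasure (F d j0) A"
      using A None Bs b' comp_meas[OF b'(2)] by (intro Fj.emeasure_pair_measure_Times) (auto intro!: measurable_sets)
    also have "\<dots> = emeasure (F d k) B * emeasure (F d j0) A"
      using PiM_comp_emeasure[of II MM "(k,l)" B, OF MM_prob b'(2) Bs] by simp
    finally show ?thesis using None b' unfolding S_eq by (simp add: mult.commute)
  next
    case (Some s)
    then obtain k l where a': "a = Some (k,l)" "(k,l) \<in> II" using a by auto
    have As: "A \<in> sets (MM (k,l))" using A a' by simp
    show ?thesis
    proof (cases b)
      case None
      have Bsp: "B \<subseteq> space (F d j0)" using B None sets.sets_into_space by auto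
      have "(\<lambda>\<omega>. (slot a \<omega>, slot b \<omega>)) -` (A \<times> B) \<inter> space (sample_space d J n F j0)
          = ((\<lambda>x. x (k,l)) -` A \<inter> space (PiM II MM)) \<times> B"
        using None a' Bsp unfolding S_eq by (auto simp: space_pair_measure)
      also have "emeasure (PiM II MM \<Otimes>\<^sub>M F d j0) \<dots> = emeasure (PiM II MM) ((\<lambda>x. x (k,l)) -` A \<inter> space (PiM II MM)) * emeasure (F d j0) B"
        using B None As a' comp_meas[OF a'(2)] by (intro Fj.emeasure_pair_measure_Times) (auto intro!: measurable_sets)
      also have "\<dots> = emeasure (F d k) A * emeasure (F d j0) B"
        using PiM_comp_emeasure[of II MM "(k,l)" A, OF MM_prob a'(2) As] by simp
      finally show ?thesis using None a' unfolding S_eq by simp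
    next
      case (Some t)
      then obtain k' l' where b': "b = Some (k',l')" "(k',l') \<in> II" using b by auto
      have Bs: "B \<in> sets (MM (k',l'))" using B b' by simp
      have ne: "(k,l) \<noteq> (k',l')" using ab a' b' by auto
      define X where "X = {x \<in> space (PiM II MM). x (k,l) \<in> A \<and> x (k',l') \<in> B}"
      have Xs: "X \<in> sets (PiM II MM)"
      proof -
        have m1: "(\<lambda>x. x (k,l)) \<in> measurable (PiM II MM) (MM (k,l))"
          using a' by (intro measurable_component_singleton) auto
        have m2: "(\<lambda>x. x (k',l')) \<in> measurable (PiM II MM) (MM (k',l'))"
          using b' by (intro measurable_component_singleton) auto
        have "X = ((\<lambda>x. x (k,l)) -` A \<inter> space (PiM II MM)) \<inter> ((\<lambda>x. x (k',l')) -` B \<inter> space (PiM II MM))"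
          unfolding X_def by blast
        then show ?thesis using sets.Int[OF measurable_sets[OF m1 As] measurable_sets[OF m2 Bs]] by simp
      qed
      have pre: "(\<lambda>\<omega>. (slot a \<omega>, slot b \<omega>)) -` (A \<times> B) \<inter> space (sample_space d J n F j0) = X \<times> space (F d j0)"
        unfolding S_eq a'(1) b'(1) space_pair_measure X_def by auto
      have e1: "emeasure (PiM II MM \<Otimes>\<^sub>M F d j0) (X \<times> space (F d j0)) = emeasure (PiM II MM) X * emeasure (F d j0) (space (F d j0))"
        using Xs by (intro Fj.emeasure_pair_measure_Times) auto
      have e2: "emeasure (PiM II MM) X = emeasure (F d k) A * emeasure (F d k') B"
        unfolding X_def using PiM_comp2_emeasure[of II MM "(k,l)" "(k',l')" A B, OF MM_prob a'(2) b'(2) ne As Bs] by (simp only: prod.case)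
      have "emeasure (sample_space d J n F j0) ((\<lambda>\<omega>. (slot a \<omega>, slot b \<omega>)) -` (A \<times> B) \<inter> space (sample_space d J n F j0))
          = emeasure (F d k) A * emeasure (F d k') B"
        unfolding pre unfolding S_eq e1 e2 Fj.emeasure_space_1 by simp
      then show ?thesis using a' b' by simp
    qed
  qed
  finally show "emeasure (F d (cls j0 a)) A * emeasure (F d (cls j0 b)) B =
     emeasure (distr (sample_space d J n F j0) (F d (cls j0 a) \<Otimes>\<^sub>M F d (cls j0 b)) (\<lambda>\<omega>. (slot a \<omega>, slot b \<omega>))) (A \<times> B)"
    by (rule sym)
qed

lemma slot_measure:
  assumes a: "a \<in> SL" and b: "b \<in> SL" and ab: "a \<noteq> b"
    and G: "G \<in> sets (F d (cls j0 a) \<Otimes>\<^sub>M F d (cls j0 b))"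
  shows "measure (sample_space d J n F j0) {\<omega> \<in> space (sample_space d J n F j0). (slot a \<omega>, slot b \<omega>) \<in> G}
       = measure (F d (cls j0 a) \<Otimes>\<^sub>M F d (cls j0 b)) G"
proof -
  have mp: "(\<lambda>\<omega>. (slot a \<omega>, slot b \<omega>)) \<in> measurable (sample_space d J n F j0) (F d (cls j0 a) \<Otimes>\<^sub>M F d (cls j0 b))"
    using slot_meas[OF a] slot_meas[OF b] by measurable
  have "measure (F d (cls j0 a) \<Otimes>\<^sub>M F d (cls j0 b)) G = measure (distr (sample_space d J n F j0) (F d (cls j0 a) \<Otimes>\<^sub>M F d (cls j0 b)) (\<lambda>\<omega>. (slot a \<omega>, slot b \<omega>))) G"
    using slot_distr[OF a b ab] by simp
  also have "\<dots> = measure (sample_space d J n F j0) ((\<lambda>\<omega>. (slot a \<omega>, slot b \<omega>)) -` G \<inter> space (sample_space d J n F j0))"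
    by (rule measure_distr[OF mp G])
  moreover have "(\<lambda>\<omega>. (slot a \<omega>, slot b \<omega>)) -` G \<inter> space (sample_space d J n F j0) = {\<omega> \<in> space (sample_space d J n F j0). (slot a \<omega>, slot b \<omega>) \<in> G}"
    by blast
  ultimately show ?thesis by simp
qed

end

lemma Min_close:
  fixes S :: "real set"
  assumes "finite S" "S \<noteq> {}" "\<forall>v\<in>S. \<bar>v - m\<bar> \<le> r"
  shows "\<bar>Min S - m\<bar> \<le> r"
  using assms Min_in by blast

lemma fd_ge:
  assumes "k \<in> {1..J}"
  shows "\<bar>a k - b k\<bar> \<le> feat_dist J a b"
proof -
  have "(a k - b k)^2 \<le> (\<Sum>k\<in>{1..J}. (a k - b k)^2)"
    using assms by (intro member_le_sum) auto
  then have "sqrt ((a k - b k)^2) \<le> feat_dist J a b"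
    unfolding feat_dist_def by (rule real_sqrt_le_mono)
  then show ?thesis by simp
qed

lemma fd_le:
  assumes J: "J \<ge> 1" and h: "\<forall>k\<in>{1..J}. \<bar>a k - b k\<bar> \<le> t"
  shows "feat_dist J a b \<le> real J * t"
proof -
  have t: "0 \<le> t" using h J by force
  have "(\<Sum>k\<in>{1..J}. (a k - b k)^2) \<le> (\<Sum>k\<in>{1..J}. t^2)"
  proof (intro sum_mono)
    fix k assume "k \<in> {1..J}"
    then have "\<bar>a k - b k\<bar> \<le> t" using h by auto
    then have "\<bar>a k - b k\<bar>^2 \<le> t^2" by (intro power_mono) auto
    then show "(a k - b k)^2 \<le> t^2" by simp
  qed
  also have "\<dots> = real J * t^2" by simp
  also have "\<dots> \<le> (real J * t)^2"
  proof -
    have J1: "1 \<le> real J" using J by simp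
    have "real J * 1 \<le> real J * real J" using J1 by (intro mult_left_mono) auto
    then have "real J * t^2 \<le> (real J * real J) * t^2" by (intro mult_right_mono) auto
    then show ?thesis by (simp add: power_mult_distrib power2_eq_square mult_ac)
  qed
  finally have "feat_dist J a b \<le> sqrt ((real J * t)^2)"
    unfolding feat_dist_def by (rule real_sqrt_le_mono)
  then show ?thesis using t by simp
qed

lemma l1dist_sym: "l1dist d u v = l1dist d v u"
  unfolding l1dist_def by (simp add: abs_minus_commute)

lemma determ:
  fixes x :: "nat \<times> nat \<Rightarrow> nat \<Rightarrow> real" and z :: "nat \<Rightarrow> real"
    and tau :: "nat \<Rightarrow> nat \<Rightarrow> real" and c eps \<delta> :: real
  assumes J: "J \<ge> 2" and n: "\<forall>j\<in>{1..J}. n j \<ge> 2" and j0: "j0 \<in> {1..J}"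
    and c: "c > 0"
    and hz: "\<forall>k\<in>{1..J}. \<forall>l\<in>{1..n k}. \<bar>l1dist d z (x (k,l)) - c * tau j0 k\<bar> \<le> c * eps"
    and hx: "\<forall>i\<in>{1..J}. \<forall>l\<in>{1..n i}. \<forall>k\<in>{1..J}. \<forall>l'\<in>{1..n k}. (k,l') \<noteq> (i,l) \<longrightarrow>
               \<bar>l1dist d (x (i,l)) (x (k,l')) - c * tau i k\<bar> \<le> c * eps"
    and gap: "\<forall>i\<in>{1..J}. i \<noteq> j0 \<longrightarrow> \<delta> \<le> 2 * tau j0 i - tau j0 j0 - tau i i"
    and eps: "eps = \<delta> / (8 * real J)" and \<delta>: "\<delta> > 0"
  shows "\<not> mdist1_misclassified d J n x z j0"
proof
  define tf where "tf = test_features d n x z"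
  define g where "g = train_features d n x"
  have tf: "\<bar>tf k - c * tau j0 k\<bar> \<le> c * eps" if k: "k \<in> {1..J}" for k
  proof -
    have "n k \<ge> 2" using n k by blast
    then have "1 \<in> {1..n k}" by auto
    then have ne: "(\<lambda>l. l1dist d z (x (k,l))) ` {1..n k} \<noteq> {}" by blast
    show ?thesis unfolding tf_def test_features_def
      by (rule Min_close) (use ne hz k in auto)
  qed
  have nonempty: "{l' \<in> {1..n k}. (k,l') \<noteq> (i,l)} \<noteq> {}" if "k \<in> {1..J}" "l \<in> {1..n i}" for i l k
  proof -
    have nk: "n k \<ge> 2" using n that by auto
    show ?thesis
    proof (cases "l = 1")
      case True
      then have "2 \<in> {l' \<in> {1..n k}. (k,l') \<noteq> (i,l)}" using nk by auto
      then show ?thesis by blast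
    next
      case False
      then have "1 \<in> {l' \<in> {1..n k}. (k,l') \<noteq> (i,l)}" using nk by auto
      then show ?thesis by blast
    qed
  qed
  have g1: "\<bar>g (i,l) k - c * tau i k\<bar> \<le> c * eps"
    if i: "i \<in> {1..J}" and l: "l \<in> {1..n i}" and k: "k \<in> {1..J}" for i l k
  proof -
    have ne: "(\<lambda>l'. l1dist d (x (i,l)) (x (k,l'))) ` {l' \<in> {1..n k}. (k,l') \<noteq> (i,l)} \<noteq> {}"
      using nonempty[OF k l] by blast
    show ?thesis unfolding g_def train_features_def
      by (rule Min_close) (use ne hx i l k in auto)
  qed
  have g2: "\<bar>g (i,l) k - c * tau k i\<bar> \<le> c * eps"
    if i: "i \<in> {1..J}" and l: "l \<in> {1..n i}" and k: "k \<in> {1..J}" for i l k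
  proof -
    have ne: "(\<lambda>l'. l1dist d (x (i,l)) (x (k,l'))) ` {l' \<in> {1..n k}. (k,l') \<noteq> (i,l)} \<noteq> {}"
      using nonempty[OF k l] by blast
    have "\<forall>v\<in>(\<lambda>l'. l1dist d (x (i,l)) (x (k,l'))) ` {l' \<in> {1..n k}. (k,l') \<noteq> (i,l)}. \<bar>v - c * tau k i\<bar> \<le> c * eps"
    proof
      fix v assume "v \<in> (\<lambda>l'. l1dist d (x (i,l)) (x (k,l'))) ` {l' \<in> {1..n k}. (k,l') \<noteq> (i,l)}"
      then obtain l' where l': "l' \<in> {1..n k}" "(k,l') \<noteq> (i,l)" "v = l1dist d (x (i,l)) (x (k,l'))" by blast
      have "v = l1dist d (x (k,l')) (x (i,l))" using l' l1dist_sym by simp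
      moreover have "(i,l) \<noteq> (k,l')" using l' by auto
      ultimately show "\<bar>v - c * tau k i\<bar> \<le> c * eps" using hx k l' i l by auto
    qed
    then show ?thesis unfolding g_def train_features_def
      by (intro Min_close) (use ne in auto)
  qed
  have J1: "J \<ge> 1" using J by simp
  have Jr: "real J \<ge> 2" using J by simp
  have eps_pos: "eps > 0" using eps \<delta> Jr by simp
  have own: "feat_dist J tf (g (j0,l')) \<le> real J * (2 * c * eps)" if l': "l' \<in> {1..n j0}" for l'
  proof (rule fd_le[OF J1], intro ballI)
    fix k assume k: "k \<in> {1..J}"
    show "\<bar>tf k - g (j0,l') k\<bar> \<le> 2 * c * eps"
      using tf[OF k] g1[OF j0 l' k] by linarith
  qed
  have other: "c * (\<delta> - 4 * eps) / 2 \<le> feat_dist J tf (g (i,l))"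
    if i: "i \<in> {1..J}" and l: "l \<in> {1..n i}" and ij: "i \<noteq> j0" for i l
  proof -
    have a1: "tf i - g (i,l) i \<ge> c * tau j0 i - c * tau i i - 2 * (c * eps)"
      using tf[OF i] g1[OF i l i] unfolding abs_le_iff by linarith
    have a2: "g (i,l) j0 - tf j0 \<ge> c * tau j0 i - c * tau j0 j0 - 2 * (c * eps)"
      using tf[OF j0] g2[OF i l j0] unfolding abs_le_iff by linarith
    have gp: "c * \<delta> \<le> c * (2 * tau j0 i - tau j0 j0 - tau i i)"
      using gap i ij c by (intro mult_left_mono) auto
    then have gp': "c * \<delta> \<le> 2 * (c * tau j0 i) - c * tau j0 j0 - c * tau i i"
      by (simp add: algebra_simps)
    have "c * (\<delta> - 4 * eps) = c * \<delta> - 4 * (c * eps)" by (simp add: algebra_simps)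
    then have "c * (\<delta> - 4 * eps) \<le> \<bar>tf i - g (i,l) i\<bar> + \<bar>tf j0 - g (i,l) j0\<bar>"
      using a1 a2 gp' by linarith
    moreover have "\<bar>tf i - g (i,l) i\<bar> \<le> feat_dist J tf (g (i,l))" by (rule fd_ge[OF i])
    moreover have "\<bar>tf j0 - g (i,l) j0\<bar> \<le> feat_dist J tf (g (i,l))" by (rule fd_ge[OF j0])
    ultimately show ?thesis by linarith
  qed
  have key: "real J * (2 * c * eps) < c * (\<delta> - 4 * eps) / 2"
  proof -
    have "4 * eps * (real J + 1) < \<delta>"
    proof -
      have "4 * eps * (real J + 1) = \<delta> * (real J + 1) / (2 * real J)"
        using eps Jr by (simp add: field_simps)
      also have "\<dots> < \<delta>" using Jr \<delta> by (simp add: field_simps)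
      finally show ?thesis .
    qed
    then have "4 * eps * real J < \<delta> - 4 * eps" by (simp add: algebra_simps)
    then have "c * (4 * eps * real J) < c * (\<delta> - 4 * eps)" using c by simp
    then show ?thesis by (simp add: algebra_simps)
  qed
  assume "mdist1_misclassified d J n x z j0"
  then obtain i l where i: "i \<in> {1..J}" and l: "l \<in> {1..n i}" and ij: "i \<noteq> j0"
    and all: "\<forall>l'\<in>{1..n j0}. feat_dist J tf (g (i,l)) \<le> feat_dist J tf (g (j0,l'))"
    unfolding mdist1_misclassified_def tf_def g_def by blast
  have "n j0 \<ge> 2" using n j0 by blast
  then have one: "1 \<in> {1..n j0}" by auto
  have "feat_dist J tf (g (i,l)) \<le> feat_dist J tf (g (j0,1))" using all one by blast
  then show False using own[OF one] other[OF i l ij] key by linarith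
qed


lemma l1_pair_meas:
  assumes sP: "sets P = sets (PiM {..<d} (\<lambda>_. borel))"
    and sQ: "sets Q = sets (PiM {..<d} (\<lambda>_. borel))"
  shows "(\<lambda>p. l1dist d (fst p) (snd p)) \<in> borel_measurable (P \<Otimes>\<^sub>M Q)"
proof -
  have mP: "(\<lambda>x. x q) \<in> borel_measurable P" if "q < d" for q
    using that by (simp add: measurable_cong_sets[OF sP refl])
  have mQ: "(\<lambda>x. x q) \<in> borel_measurable Q" if "q < d" for q
    using that by (simp add: measurable_cong_sets[OF sQ refl])
  have mf: "(\<lambda>p. fst p q) \<in> borel_measurable (P \<Otimes>\<^sub>M Q)" if "q < d" for q
    using measurable_compose[OF measurable_fst[of P Q] mP[OF that]] by simp
  have ms: "(\<lambda>p. snd p q) \<in> borel_measurable (P \<Otimes>\<^sub>M Q)" if "q < d" for q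
    using measurable_compose[OF measurable_snd[of P Q] mQ[OF that]] by simp
  have "(\<lambda>p. \<Sum>q\<in>{..<d}. \<bar>fst p q - snd p q\<bar>) \<in> borel_measurable (P \<Otimes>\<^sub>M Q)"
    by (intro borel_measurable_sum) (use mf ms in measurable)
  then show ?thesis unfolding l1dist_def by simp
qed

lemma conc_lim:
  fixes F :: "nat \<Rightarrow> nat \<Rightarrow> (nat \<Rightarrow> real) measure" and j i :: nat and eps \<tau> :: real
  assumes Pj: "\<forall>d. prob_space (F d j)" and Pi: "\<forall>d. prob_space (F d i)"
    and Sj: "\<forall>d. sets (F d j) = sets (PiM {..<d} (\<lambda>_. borel))"
    and Si: "\<forall>d. sets (F d i) = sets (PiM {..<d} (\<lambda>_. borel))"
    and Aj: "\<exists>C. \<forall>d. \<forall>q<d. integrable (F d j) (\<lambda>x. (x q)^2) \<and> (\<integral>x. (x q)^2 \<partial>(F d j)) \<le> C"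
    and Ai: "\<exists>C. \<forall>d. \<forall>q<d. integrable (F d i) (\<lambda>x. (x q)^2) \<and> (\<integral>x. (x q)^2 \<partial>(F d i)) \<le> C"
    and A2: "(\<lambda>d. (\<Sum>r<d. \<Sum>s\<in>{..<d} - {r}.
                   \<bar>correlation (F d j \<Otimes>\<^sub>M F d i)
                      (\<lambda>xy. \<bar>fst xy r - snd xy r\<bar>) (\<lambda>xy. \<bar>fst xy s - snd xy s\<bar>)\<bar>)
                  / (real d)^2) \<longlonglongrightarrow> 0"
    and A3: "(\<lambda>d. (\<Sum>q<d. mad (F d j) (F d i) q) / real d) \<longlonglongrightarrow> \<tau>"
    and e: "eps > 0"
  shows "(\<lambda>d. measure (F d j \<Otimes>\<^sub>M F d i) {p \<in> space (F d j \<Otimes>\<^sub>M F d i).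
              real d * eps < \<bar>l1dist d (fst p) (snd p) - real d * \<tau>\<bar>}) \<longlonglongrightarrow> 0"
proof -
  obtain C1 where C1: "\<forall>d. \<forall>q<d. integrable (F d j) (\<lambda>x. (x q)^2) \<and> (\<integral>x. (x q)^2 \<partial>(F d j)) \<le> C1"
    using Aj by blast
  obtain C2 where C2: "\<forall>d. \<forall>q<d. integrable (F d i) (\<lambda>x. (x q)^2) \<and> (\<integral>x. (x q)^2 \<partial>(F d i)) \<le> C2"
    using Ai by blast
  define C where "C = max C1 C2"
  define S where "S = (\<lambda>d. (\<Sum>r<d. \<Sum>s\<in>{..<d} - {r}.
                   \<bar>correlation (F d j \<Otimes>\<^sub>M F d i)
                      (\<lambda>xy. \<bar>fst xy r - snd xy r\<bar>) (\<lambda>xy. \<bar>fst xy s - snd xy s\<bar>)\<bar>))"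
  define m where "m = (\<lambda>d. (\<Sum>q<d. mad (F d j) (F d i) q) / real d)"
  define f where "f = (\<lambda>d. measure (F d j \<Otimes>\<^sub>M F d i) {p \<in> space (F d j \<Otimes>\<^sub>M F d i).
              real d * eps < \<bar>l1dist d (fst p) (snd p) - real d * \<tau>\<bar>})"
  define u where "u = (\<lambda>d. (16 * C / eps^2) / real d + (16 * C / eps^2) * (S d / (real d)^2))"
  have u0: "u \<longlonglongrightarrow> 0"
  proof -
    have "(\<lambda>d. (16 * C / eps^2) / real d) \<longlonglongrightarrow> 0" by (rule lim_const_over_n)
    moreover have "(\<lambda>d. (16 * C / eps^2) * (S d / (real d)^2)) \<longlonglongrightarrow> (16 * C / eps^2) * 0"
      using A2 unfolding S_def by (intro tendsto_mult tendsto_const)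
    ultimately show ?thesis unfolding u_def using tendsto_add[of _ 0 _ _ 0] by fastforce
  qed
  have ev_m: "eventually (\<lambda>d. \<bar>m d - \<tau>\<bar> < eps / 2) sequentially"
  proof -
    have h: "\<forall>e>0. eventually (\<lambda>d. dist (m d) \<tau> < e) sequentially"
      using A3 unfolding m_def tendsto_iff .
    have "eps / 2 > 0" using e by simp
    then have "eventually (\<lambda>d. dist (m d) \<tau> < eps / 2) sequentially"
      using h by blast
    then show ?thesis by (simp add: dist_real_def)
  qed
  have ev: "eventually (\<lambda>d. f d \<le> u d) sequentially"
    using ev_m eventually_gt_at_top[of 0]
  proof eventually_elim
    case (elim d)
    have dpos: "real d > 0" using elim by simp
    interpret PQ: prob_space "F d j \<Otimes>\<^sub>M F d i" using prob_space_pair Pj Pi by blast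
    let ?L = "\<lambda>p. l1dist d (fst p) (snd p)"
    have sumeq: "(\<Sum>q<d. mad (F d j) (F d i) q) = real d * m d" unfolding m_def using dpos by simp
    have sub: "{p \<in> space (F d j \<Otimes>\<^sub>M F d i). real d * eps < \<bar>?L p - real d * \<tau>\<bar>}
        \<subseteq> {p \<in> space (F d j \<Otimes>\<^sub>M F d i). real d * eps / 2 \<le> \<bar>?L p - (\<Sum>q<d. mad (F d j) (F d i) q)\<bar>}"
    proof safe
      fix p assume p: "p \<in> space (F d j \<Otimes>\<^sub>M F d i)" and lt: "real d * eps < \<bar>?L p - real d * \<tau>\<bar>"
      have "real d * \<bar>m d - \<tau>\<bar> \<le> real d * (eps / 2)" using elim dpos by (intro mult_left_mono) auto
      then have "\<bar>real d * m d - real d * \<tau>\<bar> \<le> real d * eps / 2"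
        using dpos by (simp add: abs_mult right_diff_distrib[symmetric])
      then show "real d * eps / 2 \<le> \<bar>?L p - (\<Sum>q<d. mad (F d j) (F d i) q)\<bar>"
        unfolding sumeq using lt by linarith
    qed
    have Lm: "?L \<in> borel_measurable (F d j \<Otimes>\<^sub>M F d i)" using l1_pair_meas Sj Si by blast
    have Bm: "{p \<in> space (F d j \<Otimes>\<^sub>M F d i). real d * eps / 2 \<le> \<bar>?L p - (\<Sum>q<d. mad (F d j) (F d i) q)\<bar>} \<in> sets (F d j \<Otimes>\<^sub>M F d i)"
      using Lm by measurable
    have "f d \<le> measure (F d j \<Otimes>\<^sub>M F d i) {p \<in> space (F d j \<Otimes>\<^sub>M F d i). real d * eps / 2 \<le> \<bar>?L p - (\<Sum>q<d. mad (F d j) (F d i) q)\<bar>}"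
      unfolding f_def by (rule PQ.finite_measure_mono[OF sub Bm])
    also have "\<dots> \<le> (4 * C * real d + 4 * C * S d) / (real d * eps / 2)^2"
      unfolding S_def
    proof (rule pair_cheb)
      show "prob_space (F d j)" "prob_space (F d i)" using Pj Pi by auto
      show "sets (F d j) = sets (PiM {..<d} (\<lambda>_. borel))" "sets (F d i) = sets (PiM {..<d} (\<lambda>_. borel))"
        using Sj Si by auto
      show "\<forall>q<d. integrable (F d j) (\<lambda>x. (x q)^2) \<and> (\<integral>x. (x q)^2 \<partial>(F d j)) \<le> C"
        using C1 unfolding C_def by (meson max.coboundedI1 order_trans)
      show "\<forall>q<d. integrable (F d i) (\<lambda>x. (x q)^2) \<and> (\<integral>x. (x q)^2 \<partial>(F d i)) \<le> C"
        using C2 unfolding C_def by (meson max.coboundedI2 order_trans)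
      show "0 < real d * eps / 2" using dpos e by simp
    qed
    also have "\<dots> = u d"
      unfolding u_def using dpos e by (simp add: field_simps power2_eq_square)
    finally show ?case .
  qed
  have ev0: "eventually (\<lambda>d. 0 \<le> f d) sequentially"
    unfolding f_def by (simp add: measure_nonneg)
  have "f \<longlonglongrightarrow> 0"
    by (rule tendsto_sandwich[OF ev0 ev tendsto_const u0])
  then show ?thesis unfolding f_def .
qed


lemma misclass_meas:
  fixes d J j0 :: nat and n :: "nat \<Rightarrow> nat" and F :: "nat \<Rightarrow> nat \<Rightarrow> (nat \<Rightarrow> real) measure"
  assumes j0: "j0 \<in> {1..J}" and Fp: "\<forall>k\<in>{1..J}. prob_space (F d k)"
    and Fs: "\<forall>k\<in>{1..J}. sets (F d k) = sets (PiM {..<d} (\<lambda>_. borel))"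
  shows "misclass_event d J n F j0 \<in> sets (sample_space d J n F j0)"
proof -
  let ?S = "sample_space d J n F j0"
  let ?SL = "insert None (Some ` (SIGMA k:{1..J}. {1..n k}))"
  have slotq: "(\<lambda>\<omega>. slot a \<omega> q) \<in> borel_measurable ?S" if a: "a \<in> ?SL" and q: "q < d" for a q
  proof -
    have c: "cls j0 a \<in> {1..J}" by (rule cls_in[OF j0 a])
    have "(\<lambda>v. v q) \<in> borel_measurable (F d (cls j0 a))"
      using q Fs c by (simp add: measurable_cong_sets[of "F d (cls j0 a)" "PiM {..<d} (\<lambda>_. borel)" borel borel])
    moreover have "slot a \<in> measurable ?S (F d (cls j0 a))"
      by (rule slot_meas) (use j0 Fp a in auto)
    ultimately show ?thesis using measurable_compose by blast
  qed
  have ml: "(\<lambda>\<omega>. l1dist d (slot a \<omega>) (slot b \<omega>)) \<in> borel_measurable ?S"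
    if a: "a \<in> ?SL" and b: "b \<in> ?SL" for a b
    unfolding l1dist_def
    by (intro borel_measurable_sum) (use slotq[OF a] slotq[OF b] in measurable)
  have tf: "(\<lambda>\<omega>. test_features d n (fst \<omega>) (snd \<omega>) k) \<in> borel_measurable ?S" if k: "k \<in> {1..J}" for k
  proof -
    have eq: "(\<lambda>\<omega>. test_features d n (fst \<omega>) (snd \<omega>) k)
        = (\<lambda>\<omega>. Min ((\<lambda>l. l1dist d (slot None \<omega>) (slot (Some (k,l)) \<omega>)) ` {1..n k}))"
      by (simp add: test_features_def)
    show ?thesis unfolding eq
      by (intro borel_measurable_Min finite_atLeastAtMost ml) (use k in auto)
  qed
  have tr: "(\<lambda>\<omega>. train_features d n (fst \<omega>) (i,l) k) \<in> borel_measurable ?S"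
    if i: "i \<in> {1..J}" and l: "l \<in> {1..n i}" and k: "k \<in> {1..J}" for i l k
  proof -
    have eq: "(\<lambda>\<omega>. train_features d n (fst \<omega>) (i,l) k)
        = (\<lambda>\<omega>. Min ((\<lambda>l'. l1dist d (slot (Some (i,l)) \<omega>) (slot (Some (k,l')) \<omega>)) ` {l' \<in> {1..n k}. (k,l') \<noteq> (i,l)}))"
      by (simp add: train_features_def)
    show ?thesis unfolding eq
      by (intro borel_measurable_Min ml) (use i l k in auto)
  qed
  have fd: "(\<lambda>\<omega>. feat_dist J (test_features d n (fst \<omega>) (snd \<omega>)) (train_features d n (fst \<omega>) (i,l))) \<in> borel_measurable ?S"
    if i: "i \<in> {1..J}" and l: "l \<in> {1..n i}" for i l
  proof -
    have "(\<lambda>\<omega>. \<Sum>k\<in>{1..J}. (test_features d n (fst \<omega>) (snd \<omega>) k - train_features d n (fst \<omega>) (i,l) k)^2) \<in> borel_measurable ?S"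
    proof (intro borel_measurable_sum)
      fix k assume k: "k \<in> {1..J}"
      show "(\<lambda>\<omega>. (test_features d n (fst \<omega>) (snd \<omega>) k - train_features d n (fst \<omega>) (i,l) k)^2) \<in> borel_measurable ?S"
        using tf[OF k] tr[OF i l k] by measurable
    qed
    then show ?thesis unfolding feat_dist_def
      using measurable_compose[OF _ borel_measurable_sqrt] by blast
  qed
  have "Measurable.pred ?S (\<lambda>\<omega>. mdist1_misclassified d J n (fst \<omega>) (snd \<omega>) j0)"
    unfolding mdist1_misclassified_def
  proof (intro pred_intros_finite(4) finite_atLeastAtMost pred_intros_logic(3))
    fix i l assume i: "i \<in> {1..J}" and l: "l \<in> {1..n i}"
    show "Measurable.pred ?S (\<lambda>\<omega>. i \<noteq> j0)" by simp
    show "Measurable.pred ?S (\<lambda>\<omega>. \<forall>l'\<in>{1..n j0}.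
          feat_dist J (test_features d n (fst \<omega>) (snd \<omega>)) (train_features d n (fst \<omega>) (i, l))
          \<le> feat_dist J (test_features d n (fst \<omega>) (snd \<omega>)) (train_features d n (fst \<omega>) (j0, l')))"
    proof (intro pred_intros_finite(3) finite_atLeastAtMost)
      fix l' assume l': "l' \<in> {1..n j0}"
      show "Measurable.pred ?S (\<lambda>\<omega>. feat_dist J (test_features d n (fst \<omega>) (snd \<omega>)) (train_features d n (fst \<omega>) (i, l))
          \<le> feat_dist J (test_features d n (fst \<omega>) (snd \<omega>)) (train_features d n (fst \<omega>) (j0, l')))"
        using fd[OF i l] fd[OF j0 l'] by measurable
    qed
  qed
  then show ?thesis unfolding misclass_event_def by (rule predE)
qed


theorem theorem3:
  fixes J :: nat and n :: "nat \<Rightarrow> nat"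
    and F :: "nat \<Rightarrow> nat \<Rightarrow> (nat \<Rightarrow> real) measure"
  assumes J: "J \<ge> 2"
    and n: "\<forall>j\<in>{1..J}. n j \<ge> 2"
    and F_prob: "\<forall>d. \<forall>j\<in>{1..J}. prob_space (F d j)"
    and F_sets: "\<forall>d. \<forall>j\<in>{1..J}. sets (F d j) = sets (PiM {..<d} (\<lambda>_. borel))"
    and A1: "\<forall>j\<in>{1..J}. \<exists>C. \<forall>d. \<forall>q<d.
               integrable (F d j) (\<lambda>x. (x q)^2) \<and> (\<integral>x. (x q)^2 \<partial>(F d j)) \<le> C"
    and A2: "\<forall>j\<in>{1..J}. \<forall>i\<in>{1..J}.
               (\<lambda>d. (\<Sum>r<d. \<Sum>s\<in>{..<d} - {r}.
                   \<bar>correlation (F d j \<Otimes>\<^sub>M F d i)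
                      (\<lambda>xy. \<bar>fst xy r - snd xy r\<bar>) (\<lambda>xy. \<bar>fst xy s - snd xy s\<bar>)\<bar>)
                  / (real d)^2) \<longlonglongrightarrow> 0"
    and A3: "\<forall>j\<in>{1..J}. \<forall>i\<in>{1..J}. \<exists>\<tau>.
               (\<lambda>d. (\<Sum>q<d. mad (F d j) (F d i) q) / real d) \<longlonglongrightarrow> \<tau>"
    and E_pos: "\<forall>j\<in>{1..J}. \<forall>i\<in>{1..J}. j \<noteq> i \<longrightarrow>
               (\<exists>E>0. (\<lambda>d. energy_avg d (F d j) (F d i)) \<longlonglongrightarrow> E)"
  shows "\<forall>j\<in>{1..J}.
           (\<forall>d. misclass_event d J n F j \<in> sets (sample_space d J n F j)) \<and>
           (\<lambda>d. measure (sample_space d J n F j) (misclass_event d J n F j)) \<longlonglongrightarrow> 0"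
proof (intro ballI conjI allI)
  fix j0 d assume j0: "j0 \<in> {1..J}"
  show "misclass_event d J n F j0 \<in> sets (sample_space d J n F j0)"
    by (rule misclass_meas) (use j0 F_prob F_sets in auto)
next
  fix j0 assume j0: "j0 \<in> {1..J}"
  define tau where "tau k i = lim (\<lambda>d. (\<Sum>q<d. mad (F d k) (F d i) q) / real d)" for k i
  have hA3: "(\<lambda>d. (\<Sum>q<d. mad (F d k) (F d i) q) / real d) \<longlonglongrightarrow> tau k i"
    if hk: "k \<in> {1..J}" and hi: "i \<in> {1..J}" for k i
  proof -
    obtain t where t: "(\<lambda>d. (\<Sum>q<d. mad (F d k) (F d i) q) / real d) \<longlonglongrightarrow> t"
      using bspec[OF bspec[OF A3 hk] hi] by (elim exE)
    then have "tau k i = t" unfolding tau_def by (rule limI)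
    then show ?thesis using t by simp
  qed
  have gap_pos: "0 < 2 * tau j0 i - tau j0 j0 - tau i i" if i: "i \<in> {1..J}" and ij: "i \<noteq> j0" for i
  proof -
    obtain E where E: "E > 0" "(\<lambda>d. energy_avg d (F d j0) (F d i)) \<longlonglongrightarrow> E"
      using mp[OF bspec[OF bspec[OF E_pos j0] i] not_sym[OF ij]] by (elim exE conjE)
    have eq: "energy_avg d (F d j0) (F d i) =
        2 * ((\<Sum>q<d. mad (F d j0) (F d i) q) / real d) - (\<Sum>q<d. mad (F d j0) (F d j0) q) / real d
          - (\<Sum>q<d. mad (F d i) (F d i) q) / real d" for d
    proof -
      have "(\<Sum>q<d. 2 * mad (F d j0) (F d i) q - mad (F d j0) (F d j0) q - mad (F d i) (F d i) q)
          = 2 * (\<Sum>q<d. mad (F d j0) (F d i) q) - (\<Sum>q<d. mad (F d j0) (F d j0) q) - (\<Sum>q<d. mad (F d i) (F d i) q)"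
        by (simp add: sum_subtractf sum_distrib_left)
      then show ?thesis unfolding energy_avg_def by (simp add: diff_divide_distrib)
    qed
    have t: "(\<lambda>d. 2 * ((\<Sum>q<d. mad (F d j0) (F d i) q) / real d) - (\<Sum>q<d. mad (F d j0) (F d j0) q) / real d
          - (\<Sum>q<d. mad (F d i) (F d i) q) / real d) \<longlonglongrightarrow> 2 * tau j0 i - tau j0 j0 - tau i i"
      using tendsto_diff[OF tendsto_diff[OF tendsto_mult[OF tendsto_const hA3[OF j0 i]] hA3[OF j0 j0]] hA3[OF i i]] .
    have "(\<lambda>d. energy_avg d (F d j0) (F d i)) \<longlonglongrightarrow> 2 * tau j0 i - tau j0 j0 - tau i i"
      unfolding eq by (rule t)
    with E(2) have "E = 2 * tau j0 i - tau j0 j0 - tau i i" by (rule LIMSEQ_unique)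
    with E(1) show ?thesis by simp
  qed
  define gaps where "gaps = (\<lambda>i. 2 * tau j0 i - tau j0 j0 - tau i i) ` ({1..J} - {j0})"
  have fin_gaps: "finite gaps" unfolding gaps_def by simp
  have ex_other: "\<exists>i\<in>{1..J}. i \<noteq> j0"
  proof (cases "j0 = 1")
    case True then show ?thesis using J by (intro bexI[of _ 2]) auto
  next
    case False then show ?thesis using J by (intro bexI[of _ 1]) auto
  qed
  have ne_gaps: "gaps \<noteq> {}" unfolding gaps_def using ex_other by blast
  define \<delta> where "\<delta> = Min gaps"
  have \<delta>pos: "\<delta> > 0"
  proof -
    have "\<delta> \<in> gaps" unfolding \<delta>_def using fin_gaps ne_gaps by (rule Min_in)
    then obtain i where i: "i \<in> {1..J} - {j0}" and deq: "\<delta> = 2 * tau j0 i - tau j0 j0 - tau i i"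
      unfolding gaps_def by blast
    then show ?thesis using gap_pos[of i] by simp
  qed
  have gap: "\<forall>i\<in>{1..J}. i \<noteq> j0 \<longrightarrow> \<delta> \<le> 2 * tau j0 i - tau j0 j0 - tau i i"
    unfolding \<delta>_def gaps_def using fin_gaps[unfolded gaps_def] by (auto intro!: Min_le)
  define eps where "eps = \<delta> / (8 * real J)"
  have eps_pos: "eps > 0" unfolding eps_def using \<delta>pos J by simp
  define SL where "SL = insert None (Some ` (SIGMA k:{1..J}. {1..n k}))"
  define PP where "PP = {ab \<in> SL \<times> SL. fst ab \<noteq> snd ab}"
  have finSL: "finite SL" unfolding SL_def by auto
  have finPP: "finite PP" unfolding PP_def using finSL by auto
  define G where "G d a b = {p \<in> space (F d (cls j0 a) \<Otimes>\<^sub>M F d (cls j0 b)).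
      real d * eps < \<bar>l1dist d (fst p) (snd p) - real d * tau (cls j0 a) (cls j0 b)\<bar>}" for d a b
  define B where "B d ab = {\<omega> \<in> space (sample_space d J n F j0).
      (slot (fst ab) \<omega>, slot (snd ab) \<omega>) \<in> G d (fst ab) (snd ab)}" for d ab
  have clsin: "cls j0 a \<in> {1..J}" if "a \<in> SL" for a
    using cls_in[OF j0] that unfolding SL_def by blast
  have Fp: "\<forall>k\<in>{1..J}. prob_space (F d k)" for d using F_prob by blast
  have Gs: "G d a b \<in> sets (F d (cls j0 a) \<Otimes>\<^sub>M F d (cls j0 b))" if "a \<in> SL" "b \<in> SL" for d a b
  proof -
    have "(\<lambda>p. l1dist d (fst p) (snd p)) \<in> borel_measurable (F d (cls j0 a) \<Otimes>\<^sub>M F d (cls j0 b))"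
      by (rule l1_pair_meas) (use F_sets clsin that in auto)
    then show ?thesis unfolding G_def by measurable
  qed
  have mp: "(\<lambda>\<omega>. (slot a \<omega>, slot b \<omega>)) \<in> measurable (sample_space d J n F j0) (F d (cls j0 a) \<Otimes>\<^sub>M F d (cls j0 b))"
    if "a \<in> SL" "b \<in> SL" for d a b
  proof -
    have "slot a \<in> measurable (sample_space d J n F j0) (F d (cls j0 a))"
      by (rule slot_meas) (use j0 Fp that in \<open>auto simp: SL_def\<close>)
    moreover have "slot b \<in> measurable (sample_space d J n F j0) (F d (cls j0 b))"
      by (rule slot_meas) (use j0 Fp that in \<open>auto simp: SL_def\<close>)
    ultimately show ?thesis by measurable
  qed
  have Bs: "B d ab \<in> sets (sample_space d J n F j0)" if "ab \<in> PP" for d ab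
  proof -
    have "Measurable.pred (sample_space d J n F j0) (\<lambda>\<omega>. (slot (fst ab) \<omega>, slot (snd ab) \<omega>) \<in> G d (fst ab) (snd ab))"
      using that unfolding PP_def by (intro pred_sets2[OF Gs mp]) auto
    then show ?thesis unfolding B_def by (rule predE)
  qed
  have Blim: "(\<lambda>d. measure (sample_space d J n F j0) (B d ab)) \<longlonglongrightarrow> 0" if ab: "ab \<in> PP" for ab
  proof -
    obtain a b where abeq: "ab = (a,b)" and a: "a \<in> SL" and b: "b \<in> SL" and ne: "a \<noteq> b"
      using ab unfolding PP_def by auto
    have ca: "cls j0 a \<in> {1..J}" and cb: "cls j0 b \<in> {1..J}" using clsin a b by auto
    have eqm: "measure (sample_space d J n F j0) (B d ab) = measure (F d (cls j0 a) \<Otimes>\<^sub>M F d (cls j0 b)) (G d a b)" for d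
      unfolding B_def abeq fst_conv snd_conv
      by (rule slot_measure) (use j0 Fp a b ne Gs in \<open>auto simp: SL_def\<close>)
    have "(\<lambda>d. measure (F d (cls j0 a) \<Otimes>\<^sub>M F d (cls j0 b)) (G d a b)) \<longlonglongrightarrow> 0"
      unfolding G_def
    proof (rule conc_lim)
      show "\<forall>d. prob_space (F d (cls j0 a))" "\<forall>d. prob_space (F d (cls j0 b))" using F_prob ca cb by auto
      show "\<forall>d. sets (F d (cls j0 a)) = sets (PiM {..<d} (\<lambda>_. borel))" "\<forall>d. sets (F d (cls j0 b)) = sets (PiM {..<d} (\<lambda>_. borel))"
        using F_sets ca cb by auto
      show "\<exists>C. \<forall>d. \<forall>q<d. integrable (F d (cls j0 a)) (\<lambda>x. (x q)^2) \<and> (\<integral>x. (x q)^2 \<partial>(F d (cls j0 a))) \<le> C"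
        by (rule bspec[OF A1 ca])
      show "\<exists>C. \<forall>d. \<forall>q<d. integrable (F d (cls j0 b)) (\<lambda>x. (x q)^2) \<and> (\<integral>x. (x q)^2 \<partial>(F d (cls j0 b))) \<le> C"
        by (rule bspec[OF A1 cb])
      show "(\<lambda>d. (\<Sum>r<d. \<Sum>s\<in>{..<d} - {r}.
                   \<bar>correlation (F d (cls j0 a) \<Otimes>\<^sub>M F d (cls j0 b))
                      (\<lambda>xy. \<bar>fst xy r - snd xy r\<bar>) (\<lambda>xy. \<bar>fst xy s - snd xy s\<bar>)\<bar>)
                  / (real d)^2) \<longlonglongrightarrow> 0"
        by (rule bspec[OF bspec[OF A2 ca] cb])
      show "(\<lambda>d. (\<Sum>q<d. mad (F d (cls j0 a)) (F d (cls j0 b)) q) / real d) \<longlonglongrightarrow> tau (cls j0 a) (cls j0 b)"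
        by (rule hA3[OF ca cb])
      show "eps > 0" by (rule eps_pos)
    qed
    then show ?thesis unfolding eqm .
  qed
  have incl: "misclass_event d J n F j0 \<subseteq> (\<Union>ab\<in>PP. B d ab)" if d: "d \<ge> 1" for d
  proof
    fix \<omega> assume \<omega>: "\<omega> \<in> misclass_event d J n F j0"
    then have sp: "\<omega> \<in> space (sample_space d J n F j0)"
      and mis: "mdist1_misclassified d J n (fst \<omega>) (snd \<omega>) j0"
      unfolding misclass_event_def by auto
    show "\<omega> \<in> (\<Union>ab\<in>PP. B d ab)"
    proof (rule ccontr)
      assume nin: "\<omega> \<notin> (\<Union>ab\<in>PP. B d ab)"
      have close: "\<bar>l1dist d (slot a \<omega>) (slot b \<omega>) - real d * tau (cls j0 a) (cls j0 b)\<bar> \<le> real d * eps"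
        if a: "a \<in> SL" and b: "b \<in> SL" and ne: "a \<noteq> b" for a b
      proof -
        have "(a,b) \<in> PP" unfolding PP_def using a b ne by auto
        then have "\<omega> \<notin> B d (a,b)" using nin by blast
        then have "(slot a \<omega>, slot b \<omega>) \<notin> G d a b" unfolding B_def using sp by auto
        moreover have "(slot a \<omega>, slot b \<omega>) \<in> space (F d (cls j0 a) \<Otimes>\<^sub>M F d (cls j0 b))"
          using measurable_space[OF mp[OF a b] sp] .
        ultimately show ?thesis unfolding G_def by auto
      qed
      have "\<not> mdist1_misclassified d J n (fst \<omega>) (snd \<omega>) j0"
      proof (rule determ[where tau=tau and c="real d" and eps=eps and \<delta>=\<delta>])
        show "J \<ge> 2" by (rule J)
        show "\<forall>j\<in>{1..J}. n j \<ge> 2" by (rule n)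
        show "j0 \<in> {1..J}" by (rule j0)
        show "real d > 0" using d by simp
        show "\<forall>k\<in>{1..J}. \<forall>l\<in>{1..n k}. \<bar>l1dist d (snd \<omega>) (fst \<omega> (k,l)) - real d * tau j0 k\<bar> \<le> real d * eps"
        proof (intro ballI)
          fix k l assume k: "k \<in> {1..J}" and l: "l \<in> {1..n k}"
          have "None \<in> SL" "Some (k,l) \<in> SL" using k l unfolding SL_def by auto
          from close[OF this] show "\<bar>l1dist d (snd \<omega>) (fst \<omega> (k,l)) - real d * tau j0 k\<bar> \<le> real d * eps"
            by simp
        qed
        show "\<forall>i\<in>{1..J}. \<forall>l\<in>{1..n i}. \<forall>k\<in>{1..J}. \<forall>l'\<in>{1..n k}. (k,l') \<noteq> (i,l) \<longrightarrow>
               \<bar>l1dist d (fst \<omega> (i,l)) (fst \<omega> (k,l')) - real d * tau i k\<bar> \<le> real d * eps"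
        proof (intro ballI impI)
          fix i l k l' assume i: "i \<in> {1..J}" and l: "l \<in> {1..n i}" and k: "k \<in> {1..J}"
            and l': "l' \<in> {1..n k}" and ne: "(k,l') \<noteq> (i,l)"
          have "Some (i,l) \<in> SL" "Some (k,l') \<in> SL" "Some (i,l) \<noteq> Some (k,l')"
            using i l k l' ne unfolding SL_def by auto
          from close[OF this] show "\<bar>l1dist d (fst \<omega> (i,l)) (fst \<omega> (k,l')) - real d * tau i k\<bar> \<le> real d * eps"
            by simp
        qed
        show "\<forall>i\<in>{1..J}. i \<noteq> j0 \<longrightarrow> \<delta> \<le> 2 * tau j0 i - tau j0 j0 - tau i i" by (rule gap)
        show "eps = \<delta> / (8 * real J)" by (rule eps_def)
        show "\<delta> > 0" by (rule \<delta>pos)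
      qed
      then show False using mis by contradiction
    qed
  qed
  have bound: "measure (sample_space d J n F j0) (misclass_event d J n F j0)
      \<le> (\<Sum>ab\<in>PP. measure (sample_space d J n F j0) (B d ab))" if d: "d \<ge> 1" for d
  proof -
    interpret S: prob_space "sample_space d J n F j0" by (rule S_prob) (use j0 Fp in auto)
    have Us: "(\<Union>ab\<in>PP. B d ab) \<in> sets (sample_space d J n F j0)"
      using Bs finPP by (intro sets.finite_UN) auto
    have "measure (sample_space d J n F j0) (misclass_event d J n F j0) \<le> measure (sample_space d J n F j0) (\<Union>ab\<in>PP. B d ab)"
      by (rule S.finite_measure_mono[OF incl[OF d] Us])
    also have "\<dots> \<le> (\<Sum>ab\<in>PP. measure (sample_space d J n F j0) (B d ab))"
      using Bs finPP by (intro S.finite_measure_subadditive_finite) auto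
    finally show ?thesis .
  qed
  have sum0: "(\<lambda>d. \<Sum>ab\<in>PP. measure (sample_space d J n F j0) (B d ab)) \<longlonglongrightarrow> 0"
    by (rule tendsto_null_sum) (rule Blim)
  have ev1: "eventually (\<lambda>d. measure (sample_space d J n F j0) (misclass_event d J n F j0)
      \<le> (\<Sum>ab\<in>PP. measure (sample_space d J n F j0) (B d ab))) sequentially"
    using eventually_ge_at_top[of 1] by eventually_elim (rule bound)
  have ev0: "eventually (\<lambda>d. 0 \<le> measure (sample_space d J n F j0) (misclass_event d J n F j0)) sequentially"
    by (simp add: measure_nonneg)
  show "(\<lambda>d. measure (sample_space d J n F j0) (misclass_event d J n F j0)) \<longlonglongrightarrow> 0"
    by (rule tendsto_sandwich[OF ev0 ev1 tendsto_const sum0])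
qed


end
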